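(* Let $T:\mathbf{Set}\to\mathbf{Set}$ be a functor and $\Lambda$ a strongly expressive set of monotone singleton-preserving predicate liftings for $T$. Let $(X,\xi)$ be a $T$-coalgebra and let $\lambda_1,\dots,\lambda_k$ be $k$-ary monotone singleton-preserving predicate liftings for $T$, each obtained from a member of $\Lambda$ by reordering, duplicating and/or adding dummy arguments. Let $(A_1,\dots,A_k)$ be the greatest fixed point (w.r.t. componentwise inclusion) of the monotone map $h:(\mathcal{P}X)^k\to(\mathcal{P}X)^k$, $$h(X_1,\dots,X_k)=\big(\xi^{-1}[\lambda_{1,X}(X_1,\dots,X_k)],\dots,\xi^{-1}[\lambda_{k,X}(X_1,\dots,X_k)]\big).$$ Then for each $i$, all elements of $A_i$ are behaviourally equivalent to each other, and for all $i,j$ either $A_i\cap A_j=\varnothing$ or $A_i=A_j$.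
   Context: An $n$-ary predicate lifting for $T$ is a family $\lambda_X:(\mathcal{P}X)^n\to\mathcal{P}(TX)$ natural w.r.t. preimages ($\lambda_X(f^{-1}[A_1],\dots,f^{-1}[A_n])=(Tf)^{-1}[\lambda_Y(A_1,\dots,A_n)]$); monotone if monotone in every argument; singleton-preserving if $|\lambda_X(\{x_1\},\dots,\{x_n\})|=1$ always. $\Lambda$ is strongly expressive if for every set $X$ and $t\in TX$ there exist $\lambda/n\in\Lambda$ and $x_i\in X$ with $\{t\}=\lambda_X(\{x_1\},\dots,\{x_n\})$. A $T$-coalgebra is $(X,\xi)$ with $\xi:X\to TX$; coalgebra morphisms $h$ satisfy $Th\circ\xi=\zeta\circ h$; two states are behaviourally equivalent if some pair of coalgebra morphisms into a common coalgebra identifies them. *)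

theory Defs
  imports "HOL-Library.FuncSet"
begin

text \<open>Set functors are modelled on the subsets of a universe type 'u:
  TX X is the set T(X) (a subset of the type 't) and Tmap X Y f is T f,
  for f a function from X to Y (only its values on X matter).\<close>

definition set_functor ::
  "('u set \<Rightarrow> 't set) \<Rightarrow> ('u set \<Rightarrow> 'u set \<Rightarrow> ('u \<Rightarrow> 'u) \<Rightarrow> 't \<Rightarrow> 't) \<Rightarrow> bool" where
  "set_functor TX Tmap \<longleftrightarrow>
     (\<forall>X Y f. f \<in> X \<rightarrow> Y \<longrightarrow> Tmap X Y f \<in> TX X \<rightarrow> TX Y) \<and>
     (\<forall>X Y f g t. f \<in> X \<rightarrow> Y \<longrightarrow> (\<forall>x\<in>X. f x = g x) \<longrightarrow> t \<in> TX X \<longrightarrow>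
        Tmap X Y f t = Tmap X Y g t) \<and>
     (\<forall>X t. t \<in> TX X \<longrightarrow> Tmap X X id t = t) \<and>
     (\<forall>X Y Z f g t. f \<in> X \<rightarrow> Y \<longrightarrow> g \<in> Y \<rightarrow> Z \<longrightarrow> t \<in> TX X \<longrightarrow>
        Tmap X Z (g \<circ> f) t = Tmap Y Z g (Tmap X Y f t))"

definition pred_lifting ::
  "('u set \<Rightarrow> 't set) \<Rightarrow> ('u set \<Rightarrow> 'u set \<Rightarrow> ('u \<Rightarrow> 'u) \<Rightarrow> 't \<Rightarrow> 't) \<Rightarrow> nat
     \<Rightarrow> ('u set \<Rightarrow> 'u set list \<Rightarrow> 't set) \<Rightarrow> bool" where
  "pred_lifting TX Tmap n l \<longleftrightarrow>
     (\<forall>X As. length As = n \<longrightarrow> set As \<subseteq> Pow X \<longrightarrow> l X As \<subseteq> TX X) \<and>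
     (\<forall>X Y f As. f \<in> X \<rightarrow> Y \<longrightarrow> length As = n \<longrightarrow> set As \<subseteq> Pow Y \<longrightarrow>
        l X (map (\<lambda>A. f -` A \<inter> X) As) = {t \<in> TX X. Tmap X Y f t \<in> l Y As})"

definition monotone_lifting :: "nat \<Rightarrow> ('u set \<Rightarrow> 'u set list \<Rightarrow> 't set) \<Rightarrow> bool" where
  "monotone_lifting n l \<longleftrightarrow>
     (\<forall>X As Bs. length As = n \<longrightarrow> length Bs = n \<longrightarrow> set Bs \<subseteq> Pow X \<longrightarrow>
        (\<forall>i<n. As ! i \<subseteq> Bs ! i) \<longrightarrow> l X As \<subseteq> l X Bs)"

definition singleton_preserving :: "nat \<Rightarrow> ('u set \<Rightarrow> 'u set list \<Rightarrow> 't set) \<Rightarrow> bool" where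
  "singleton_preserving n l \<longleftrightarrow>
     (\<forall>X xs. length xs = n \<longrightarrow> set xs \<subseteq> X \<longrightarrow> card (l X (map (\<lambda>x. {x}) xs)) = 1)"

definition strongly_expressive ::
  "('u set \<Rightarrow> 't set) \<Rightarrow> (nat \<times> ('u set \<Rightarrow> 'u set list \<Rightarrow> 't set)) set \<Rightarrow> bool" where
  "strongly_expressive TX Lam \<longleftrightarrow>
     (\<forall>X. \<forall>t\<in>TX X. \<exists>(n, l)\<in>Lam. \<exists>xs. length xs = n \<and> set xs \<subseteq> X \<and>
        {t} = l X (map (\<lambda>x. {x}) xs))"

definition derived_lifting ::
  "(nat \<times> ('u set \<Rightarrow> 'u set list \<Rightarrow> 't set)) set \<Rightarrow> nat \<Rightarrow> ('u set \<Rightarrow> 'u set list \<Rightarrow> 't set) \<Rightarrow> bool" where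
  "derived_lifting Lam k l \<longleftrightarrow>
     (\<exists>(m, \<mu>)\<in>Lam. \<exists>\<sigma>. (\<forall>j<m. \<sigma> j < k) \<and>
        (\<forall>X As. length As = k \<longrightarrow> set As \<subseteq> Pow X \<longrightarrow>
           l X As = \<mu> X (map (\<lambda>j. As ! \<sigma> j) [0..<m])))"

definition coalgebra :: "('u set \<Rightarrow> 't set) \<Rightarrow> 'u set \<Rightarrow> ('u \<Rightarrow> 't) \<Rightarrow> bool" where
  "coalgebra TX X \<xi> \<longleftrightarrow> \<xi> \<in> X \<rightarrow> TX X"

definition coalg_morphism ::
  "('u set \<Rightarrow> 'u set \<Rightarrow> ('u \<Rightarrow> 'u) \<Rightarrow> 't \<Rightarrow> 't) \<Rightarrow> 'u set \<Rightarrow> ('u \<Rightarrow> 't)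
     \<Rightarrow> 'u set \<Rightarrow> ('u \<Rightarrow> 't) \<Rightarrow> ('u \<Rightarrow> 'u) \<Rightarrow> bool" where
  "coalg_morphism Tmap X \<xi> Z \<zeta> h \<longleftrightarrow>
     h \<in> X \<rightarrow> Z \<and> (\<forall>x\<in>X. Tmap X Z h (\<xi> x) = \<zeta> (h x))"

definition beh_equiv ::
  "('u set \<Rightarrow> 't set) \<Rightarrow> ('u set \<Rightarrow> 'u set \<Rightarrow> ('u \<Rightarrow> 'u) \<Rightarrow> 't \<Rightarrow> 't) \<Rightarrow>
     'u set \<Rightarrow> ('u \<Rightarrow> 't) \<Rightarrow> 'u \<Rightarrow> 'u set \<Rightarrow> ('u \<Rightarrow> 't) \<Rightarrow> 'u \<Rightarrow> bool" where
  "beh_equiv TX Tmap X \<xi> x Y \<upsilon> y \<longleftrightarrow>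
     (\<exists>Z \<zeta> f g. coalgebra TX Z \<zeta> \<and> coalg_morphism Tmap X \<xi> Z \<zeta> f \<and>
        coalg_morphism Tmap Y \<upsilon> Z \<zeta> g \<and> f x = g y)"

end

theory Submission imports Defs begin

lemma mono_apply:
  assumes "monotone_lifting n l" "length As = n" "length Bs = n" "set Bs \<subseteq> Pow X"
    "\<forall>i<n. As ! i \<subseteq> Bs ! i"
  shows "l X As \<subseteq> l X Bs"
  using assms unfolding monotone_lifting_def by simp

lemma gfp_bound:
  fixes lams :: "nat \<Rightarrow> 'u set \<Rightarrow> 'u set list \<Rightarrow> 't set"
  assumes mono: "\<forall>i<k. monotone_lifting k (lams i)"
    and AX: "\<forall>i<k. A i \<subseteq> X"
    and Amax: "\<forall>B. (\<forall>i<k. B i \<subseteq> X) \<longrightarrow> (\<forall>i<k. B i = {x \<in> X. \<xi> x \<in> lams i X (map B [0..<k])})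
              \<longrightarrow> (\<forall>i<k. B i \<subseteq> A i)"
    and BX: "\<forall>i<k. B i \<subseteq> X"
    and Bpost: "\<forall>i<k. B i \<subseteq> {x \<in> X. \<xi> x \<in> lams i X (map B [0..<k])}"
  shows "\<forall>i<k. B i \<subseteq> A i"
proof -
  define F where "F = (\<lambda>P::nat \<Rightarrow> 'u set. \<lambda>i. if i<k then {x\<in>X. \<xi> x \<in> lams i X (map (\<lambda>j. P j \<inter> X) [0..<k])} else {})"
  have monoF: "mono F"
  proof (rule monoI, rule le_funI)
    fix P Q :: "nat \<Rightarrow> 'u set" and i assume PQ: "P \<le> Q"
    show "F P i \<le> F Q i"
    proof (cases "i<k")
      case True
      have "lams i X (map (\<lambda>j. P j \<inter> X) [0..<k]) \<subseteq> lams i X (map (\<lambda>j. Q j \<inter> X) [0..<k])"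
      proof -
        have "monotone_lifting k (lams i)" using mono True by blast
        moreover have "\<forall>j<k. map (\<lambda>j. P j \<inter> X) [0..<k] ! j \<subseteq> map (\<lambda>j. Q j \<inter> X) [0..<k] ! j"
          using PQ by (auto simp: le_fun_def)
        moreover have "set (map (\<lambda>j. Q j \<inter> X) [0..<k]) \<subseteq> Pow X" by auto
        ultimately show ?thesis using PQ by (intro mono_apply) (auto simp: le_fun_def subset_iff)
      qed
      then show ?thesis using True unfolding F_def by auto
    qed (simp add: F_def)
  qed
  define G where "G = gfp F"
  have GF: "G = F G" unfolding G_def using monoF by (rule gfp_unfold)
  have GX: "\<forall>i<k. G i \<subseteq> X"
  proof (intro allI impI)
    fix i assume "i<k"
    have "G i = F G i" using GF by simp
    then show "G i \<subseteq> X" unfolding F_def using \<open>i<k\<close> by auto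
  qed
  have mapG: "map (\<lambda>j. G j \<inter> X) [0..<k] = map G [0..<k]" using GX by (auto intro!: map_cong)
  have "\<forall>i<k. G i = {x \<in> X. \<xi> x \<in> lams i X (map G [0..<k])}"
  proof (intro allI impI)
    fix i assume "i<k"
    have "G i = F G i" using GF by simp
    then show "G i = {x \<in> X. \<xi> x \<in> lams i X (map G [0..<k])}" unfolding F_def mapG using \<open>i<k\<close> by simp
  qed
  then have GA: "\<forall>i<k. G i \<subseteq> A i" using Amax GX by blast
  define B' where "B' = (\<lambda>i. if i<k then B i else {})"
  have mapB: "map (\<lambda>j. B' j \<inter> X) [0..<k] = map B [0..<k]" using BX by (auto simp: B'_def intro!: map_cong)
  have "B' \<le> F B'" unfolding le_fun_def F_def mapB using Bpost by (auto simp: B'_def)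
  then have "B' \<le> G" unfolding G_def by (rule gfp_upperbound)
  show ?thesis
  proof (intro allI impI)
    fix i assume i: "i<k"
    have "B' i \<subseteq> G i" using \<open>B' \<le> G\<close> by (simp add: le_fun_def)
    then show "B i \<subseteq> A i" using GA i by (auto simp: B'_def)
  qed
qed

lemma nat_apply:
  assumes "pred_lifting TX Tmap n l" "f \<in> X \<rightarrow> Y" "length As = n" "set As \<subseteq> Pow Y"
  shows "l X (map (\<lambda>A. f -` A \<inter> X) As) = {t \<in> TX X. Tmap X Y f t \<in> l Y As}"
proof -
  have "\<forall>X Y f As. f \<in> X \<rightarrow> Y \<longrightarrow> length As = n \<longrightarrow> set As \<subseteq> Pow Y \<longrightarrow>
        l X (map (\<lambda>A. f -` A \<inter> X) As) = {t \<in> TX X. Tmap X Y f t \<in> l Y As}"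
    using assms(1) unfolding pred_lifting_def by (rule conjunct2)
  then show ?thesis using assms(2-4) by simp
qed

lemma sp_apply:
  assumes "singleton_preserving n l" "length xs = n" "set xs \<subseteq> X"
  shows "card (l X (map (\<lambda>x. {x}) xs)) = 1"
  using assms unfolding singleton_preserving_def by simp

theorem mainTheorem7:
  fixes TX :: "'u set \<Rightarrow> 't set"
    and Tmap :: "'u set \<Rightarrow> 'u set \<Rightarrow> ('u \<Rightarrow> 'u) \<Rightarrow> 't \<Rightarrow> 't"
    and Lam :: "(nat \<times> ('u set \<Rightarrow> 'u set list \<Rightarrow> 't set)) set"
    and X :: "'u set" and \<xi> :: "'u \<Rightarrow> 't"
    and k :: nat and lams :: "nat \<Rightarrow> 'u set \<Rightarrow> 'u set list \<Rightarrow> 't set"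
    and A :: "nat \<Rightarrow> 'u set"
  assumes "set_functor TX Tmap"
    and "\<forall>(n, l)\<in>Lam. pred_lifting TX Tmap n l \<and> monotone_lifting n l \<and> singleton_preserving n l"
    and "strongly_expressive TX Lam"
    and "coalgebra TX X \<xi>"
    and "\<forall>i<k. pred_lifting TX Tmap k (lams i) \<and> monotone_lifting k (lams i) \<and>
               singleton_preserving k (lams i) \<and> derived_lifting Lam k (lams i)"
    and "\<forall>i<k. A i \<subseteq> X"
    and "\<forall>i<k. A i = {x \<in> X. \<xi> x \<in> lams i X (map A [0..<k])}"
    and "\<forall>B. (\<forall>i<k. B i \<subseteq> X) \<longrightarrow> (\<forall>i<k. B i = {x \<in> X. \<xi> x \<in> lams i X (map B [0..<k])})
              \<longrightarrow> (\<forall>i<k. B i \<subseteq> A i)"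
  shows "(\<forall>i<k. \<forall>x\<in>A i. \<forall>y\<in>A i. beh_equiv TX Tmap X \<xi> x X \<xi> y) \<and>
         (\<forall>i<k. \<forall>j<k. A i \<inter> A j = {} \<or> A i = A j)"
proof -
  note sfun = assms(1) and coal = assms(4) and lm = assms(5) and AX = assms(6) and Afix = assms(7) and Amax = assms(8)
  have Tm0: "\<forall>X Y f. f \<in> X \<rightarrow> Y \<longrightarrow> Tmap X Y f \<in> TX X \<rightarrow> TX Y"
    using sfun unfolding set_functor_def by (rule conjunct1)
  have Tm: "\<And>Y f. f \<in> X \<rightarrow> Y \<Longrightarrow> Tmap X Y f \<in> TX X \<rightarrow> TX Y" using Tm0 by simp
  have xiT: "\<And>x. x \<in> X \<Longrightarrow> \<xi> x \<in> TX X" using coal unfolding coalgebra_def by blast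
  have AxiT: "\<And>i x. i<k \<Longrightarrow> x \<in> A i \<Longrightarrow> x \<in> X \<and> \<xi> x \<in> lams i X (map A [0..<k])"
  proof -
    fix i x assume "i<k" "x \<in> A i"
    moreover have "A i = {x \<in> X. \<xi> x \<in> lams i X (map A [0..<k])}" using Afix \<open>i<k\<close> by blast
    ultimately have "x \<in> {x \<in> X. \<xi> x \<in> lams i X (map A [0..<k])}" by (simp only:)
    then show "x \<in> X \<and> \<xi> x \<in> lams i X (map A [0..<k])" by simp
  qed
  define R where "R = {(i,j). i<k \<and> j<k \<and> A i \<inter> A j \<noteq> {}}"
  have symR: "sym R" unfolding R_def sym_def by blast
  have symRs: "\<And>i j. (i,j) \<in> R\<^sup>* \<Longrightarrow> (j,i) \<in> R\<^sup>*" using sym_rtrancl[OF symR] unfolding sym_def by blast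
  define C where "C i = (\<Union>j\<in>{j. j<k \<and> (i,j) \<in> R\<^sup>*}. A j)" for i
  define r where "r i = (SOME a. a \<in> C i)" for i
  define q where "q x = (if (\<exists>i<k. x \<in> A i) then r (SOME i. i<k \<and> x \<in> A i) else x)" for x
  define Z where "Z = q ` X"
  define E where "E = Tmap X Z q"
  have qZ: "q \<in> X \<rightarrow> Z" unfolding Z_def by auto
  have ET: "\<And>t. t \<in> TX X \<Longrightarrow> E t \<in> TX Z" using Tm[OF qZ] unfolding E_def by blast
  have C_eq: "\<And>i j. (i,j) \<in> R\<^sup>* \<Longrightarrow> C i = C j"
  proof -
    fix i j assume ij: "(i,j) \<in> R\<^sup>*"
    have "\<And>l. (j,l) \<in> R\<^sup>* \<Longrightarrow> (i,l) \<in> R\<^sup>*" using ij by (rule rtrancl_trans)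
    moreover have "\<And>l. (i,l) \<in> R\<^sup>* \<Longrightarrow> (j,l) \<in> R\<^sup>*" using symRs[OF ij] by (rule rtrancl_trans)
    ultimately have "{l. l<k \<and> (i,l) \<in> R\<^sup>*} = {l. l<k \<and> (j,l) \<in> R\<^sup>*}" by blast
    then show "C i = C j" unfolding C_def by simp
  qed
  have F1: "\<And>i x. i<k \<Longrightarrow> x \<in> A i \<Longrightarrow> q x = r i"
  proof -
    fix i x assume i: "i<k" "x \<in> A i"
    define i' where "i' = (SOME i. i<k \<and> x \<in> A i)"
    have i': "i'<k \<and> x \<in> A i'" unfolding i'_def by (rule someI[of _ i]) (rule conjI[OF i])
    then have "(i,i') \<in> R" unfolding R_def using i by blast
    then have "C i = C i'" by (rule C_eq[OF r_into_rtrancl])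
    then have "r i = r i'" unfolding r_def by simp
    moreover have ex: "\<exists>i<k. x \<in> A i" using i by blast
    moreover have "q x = r i'" unfolding q_def i'_def using ex by (simp only: ex if_True)
    ultimately show "q x = r i" by simp
  qed
  have rC: "\<And>i. i<k \<Longrightarrow> A i \<noteq> {} \<Longrightarrow> \<exists>j<k. (i,j) \<in> R\<^sup>* \<and> r i \<in> A j"
  proof -
    fix i assume i: "i<k" "A i \<noteq> {}"
    have "(i,i) \<in> R\<^sup>*" by (rule rtrancl.rtrancl_refl)
    then have "A i \<subseteq> C i" unfolding C_def using i by auto
    then have "C i \<noteq> {}" using i by blast
    then have "r i \<in> C i" unfolding r_def by (simp add: some_in_eq)
    then show "\<exists>j<k. (i,j) \<in> R\<^sup>* \<and> r i \<in> A j" unfolding C_def by simp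
  qed
  have r_cls: "\<And>i j. i<k \<Longrightarrow> j<k \<Longrightarrow> A i \<noteq> {} \<Longrightarrow> A j \<noteq> {} \<Longrightarrow> r i = r j \<Longrightarrow> (i,j) \<in> R\<^sup>*"
  proof -
    fix i j assume h: "i<k" "j<k" "A i \<noteq> {}" "A j \<noteq> {}" "r i = r j"
    obtain i' where i': "i'<k" "(i,i') \<in> R\<^sup>*" "r i \<in> A i'" using rC h by blast
    obtain j' where j': "j'<k" "(j,j') \<in> R\<^sup>*" "r j \<in> A j'" using rC h by blast
    have "r i \<in> A i' \<inter> A j'" using i'(3) j'(3) h(5) by simp
    then have "(i',j') \<in> R" unfolding R_def using i'(1) j'(1) by blast
    then have "(i,j') \<in> R\<^sup>*" using i'(2) by (rule rtrancl_into_rtrancl[rotated])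
    then show "(i,j) \<in> R\<^sup>*" using symRs[OF j'(2)] by (rule rtrancl_trans)
  qed
  have rUA: "\<And>i. i<k \<Longrightarrow> A i \<noteq> {} \<Longrightarrow> \<exists>j<k. r i \<in> A j" using rC by blast
  have rZ: "\<And>i. i<k \<Longrightarrow> A i \<noteq> {} \<Longrightarrow> r i \<in> Z"
  proof -
    fix i assume "i<k" "A i \<noteq> {}"
    then obtain a where a: "a \<in> A i" by blast
    then have "q a = r i" using F1[OF \<open>i<k\<close>] by simp
    moreover have "a \<in> X" using a AX \<open>i<k\<close> by blast
    ultimately show "r i \<in> Z" unfolding Z_def by (metis imageI)
  qed
  have qout: "\<And>x. \<not>(\<exists>i<k. x \<in> A i) \<Longrightarrow> q x = x" unfolding q_def by (rule if_not_P)
  have L: "\<And>i x y. i<k \<Longrightarrow> x \<in> A i \<Longrightarrow> y \<in> A i \<Longrightarrow> E (\<xi> x) = E (\<xi> y)"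
  proof -
    fix i x y assume h: "i<k" "x \<in> A i" "y \<in> A i"
    have xX: "x \<in> X" using h AX by blast
    define S where "S = map (\<lambda>j. if A j \<noteq> {} then r j else q x) [0..<k]"
    have SZ: "set S \<subseteq> Z" unfolding S_def using xX qZ by (auto intro!: rZ)
    have lenS: "length S = k" unfolding S_def by simp
    have pl: "pred_lifting TX Tmap k (lams i)" and ml: "monotone_lifting k (lams i)"
      and sp: "singleton_preserving k (lams i)" using lm h by auto
    have nat: "lams i X (map (\<lambda>A. q -` A \<inter> X) (map (\<lambda>x. {x}) S)) = {t \<in> TX X. E t \<in> lams i Z (map (\<lambda>x. {x}) S)}"
      unfolding E_def by (rule nat_apply[OF pl qZ]) (use lenS SZ in auto)
    have sub: "lams i X (map A [0..<k]) \<subseteq> lams i X (map (\<lambda>A. q -` A \<inter> X) (map (\<lambda>x. {x}) S))"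
    proof (rule mono_apply[OF ml])
      show "\<forall>ia<k. map A [0..<k] ! ia \<subseteq> map (\<lambda>A. q -` A \<inter> X) (map (\<lambda>x. {x}) S) ! ia"
        unfolding S_def using F1 AX by auto
    qed (auto simp: lenS)
    have c1: "card (lams i Z (map (\<lambda>x. {x}) S)) = 1" by (rule sp_apply[OF sp lenS SZ])
    have "E (\<xi> x) \<in> lams i Z (map (\<lambda>x. {x}) S)" "E (\<xi> y) \<in> lams i Z (map (\<lambda>x. {x}) S)"
      using AxiT[OF h(1) h(2)] AxiT[OF h(1) h(3)] sub nat by blast+
    then show "E (\<xi> x) = E (\<xi> y)" using c1 by (metis card_1_singletonE singletonD)
  qed
  have P: "\<And>i j x y. i<k \<Longrightarrow> x \<in> A i \<Longrightarrow> (i,j) \<in> R\<^sup>* \<Longrightarrow> y \<in> A j \<Longrightarrow> E (\<xi> x) = E (\<xi> y)"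
  proof -
    fix i j x y assume h: "i<k" "x \<in> A i" "(i,j) \<in> R\<^sup>*" "y \<in> A j"
    have "\<forall>y\<in>A j. E (\<xi> x) = E (\<xi> y)"
      using h(3)
    proof (induction rule: rtrancl_induct)
      case base
      then show ?case using L h by blast
    next
      case (step j l)
      then have jl: "j<k" "l<k" "A j \<inter> A l \<noteq> {}" unfolding R_def by auto
      then obtain w where "w \<in> A j" "w \<in> A l" by blast
      then show ?case using step.IH L[OF jl(2)] by metis
    qed
    then show "E (\<xi> x) = E (\<xi> y)" using h by blast
  qed
  define B where "B l = (if A l = {} then {} else {x\<in>X. q x = r l})" for l
  have BX: "\<forall>i<k. B i \<subseteq> X" unfolding B_def by auto
  have AB: "\<And>i. i<k \<Longrightarrow> A i \<subseteq> B i" unfolding B_def using F1 AX by auto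
  have Bpost: "\<forall>l<k. B l \<subseteq> {x \<in> X. \<xi> x \<in> lams l X (map B [0..<k])}"
  proof (intro allI impI subsetI)
    fix l x assume l: "l<k" and xB: "x \<in> B l"
    then have Al: "A l \<noteq> {}" and xX: "x \<in> X" and qx: "q x = r l" unfolding B_def by (auto split: if_splits)
    have "\<exists>j<k. x \<in> A j"
    proof (rule ccontr)
      assume "\<not> (\<exists>j<k. x \<in> A j)"
      then have "q x = x" by (rule qout)
      then show False using rUA[OF l Al] qx \<open>\<not> (\<exists>j<k. x \<in> A j)\<close> by auto
    qed
    then obtain j where j: "j<k" "x \<in> A j" by blast
    have "r j = r l" using F1[OF j] qx by simp
    moreover have "A j \<noteq> {}" using j by blast
    ultimately have "(j,l) \<in> R\<^sup>*" using r_cls[OF j(1) l _ Al] by blast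
    obtain z where z: "z \<in> A l" using Al by blast
    have Exz: "E (\<xi> x) = E (\<xi> z)" using P[OF j(1) j(2) \<open>(j,l) \<in> R\<^sup>*\<close> z] .
    define Sf where "Sf j = (if A j = {} then {} else {r j})" for j
    have mapB: "map B [0..<k] = map (\<lambda>A. q -` A \<inter> X) (map Sf [0..<k])"
      unfolding B_def Sf_def by (auto intro!: map_cong)
    have pl: "pred_lifting TX Tmap k (lams l)" and ml: "monotone_lifting k (lams l)"
      using lm l by auto
    have nat: "lams l X (map B [0..<k]) = {t \<in> TX X. E t \<in> lams l Z (map Sf [0..<k])}"
      unfolding mapB E_def by (rule nat_apply[OF pl qZ]) (auto simp: Sf_def intro!: rZ)
    have "lams l X (map A [0..<k]) \<subseteq> lams l X (map B [0..<k])"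
      by (rule mono_apply[OF ml]) (use AB BX in auto)
    then have "\<xi> z \<in> lams l X (map B [0..<k])" using AxiT[OF l z] by blast
    then have "E (\<xi> z) \<in> lams l Z (map Sf [0..<k])" using nat by blast
    then show "x \<in> {x \<in> X. \<xi> x \<in> lams l X (map B [0..<k])}" using nat Exz xX xiT by auto
  qed
  have BA: "\<forall>i<k. B i \<subseteq> A i"
    by (rule gfp_bound[of k lams A X \<xi> B, OF _ AX Amax BX Bpost]) (use lm in blast)
  have part2: "\<forall>i<k. \<forall>j<k. A i \<inter> A j = {} \<or> A i = A j"
  proof (intro allI impI)
    fix i j assume ij: "i<k" "j<k"
    show "A i \<inter> A j = {} \<or> A i = A j"
    proof (cases "A i \<inter> A j = {}")
      case False
      then have "(i,j) \<in> R" unfolding R_def using ij by blast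
      then have "C i = C j" using C_eq by blast
      then have rij: "r i = r j" unfolding r_def by simp
      have "A i \<noteq> {}" "A j \<noteq> {}" using False by auto
      then have "B i = B j" unfolding B_def rij by simp
      then show ?thesis using AB BA ij by blast
    qed simp
  qed
  have Q: "\<And>x x'. x \<in> X \<Longrightarrow> x' \<in> X \<Longrightarrow> q x = q x' \<Longrightarrow> E (\<xi> x) = E (\<xi> x')"
  proof -
    fix x x' assume h: "x \<in> X" "x' \<in> X" "q x = q x'"
    show "E (\<xi> x) = E (\<xi> x')"
    proof (cases "\<exists>i<k. x \<in> A i")
      case True
      then obtain i where i: "i<k" "x \<in> A i" by blast
      have "\<exists>j<k. x' \<in> A j"
      proof (rule ccontr)
        assume n: "\<not> (\<exists>j<k. x' \<in> A j)"
        then have "q x' = x'" by (rule qout)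
        then have "x' = r i" using h F1 i by auto
        then show False using rUA[of i] i n by blast
      qed
      then obtain j where j: "j<k" "x' \<in> A j" by blast
      have "r i = r j" using F1[OF i] F1[OF j] h(3) by simp
      then have "(i,j) \<in> R\<^sup>*" using r_cls i j by blast
      then show ?thesis using P[OF i(1) i(2) _ j(2)] by simp
    next
      case False
      then have qx: "q x = x" by (rule qout)
      have "\<not> (\<exists>j<k. x' \<in> A j)"
      proof
        assume "\<exists>j<k. x' \<in> A j"
        then obtain j where j: "j<k" "x' \<in> A j" by blast
        then have "x = r j" using F1[OF j] h(3) qx by simp
        then show False using rUA[of j] j False by blast
      qed
      then have "q x' = x'" by (rule qout)
      then show ?thesis using qx h by simp
    qed
  qed
  define \<zeta> where "\<zeta> z = E (\<xi> (SOME x. x \<in> X \<and> q x = z))" for z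
  have coZ: "coalgebra TX Z \<zeta>"
    unfolding coalgebra_def
  proof
    fix z assume "z \<in> Z"
    then have "\<exists>x. x \<in> X \<and> q x = z" unfolding Z_def by blast
    then have "(SOME x. x \<in> X \<and> q x = z) \<in> X \<and> q (SOME x. x \<in> X \<and> q x = z) = z" by (rule someI_ex)
    then have "(SOME x. x \<in> X \<and> q x = z) \<in> X" by simp
    then show "\<zeta> z \<in> TX Z" unfolding \<zeta>_def using ET xiT by blast
  qed
  have mor: "coalg_morphism Tmap X \<xi> Z \<zeta> q"
    unfolding coalg_morphism_def
  proof (intro conjI qZ ballI)
    fix x assume x: "x \<in> X"
    then have "\<exists>x'. x' \<in> X \<and> q x' = q x" by blast
    then have s: "(SOME x'. x' \<in> X \<and> q x' = q x) \<in> X \<and> q (SOME x'. x' \<in> X \<and> q x' = q x) = q x"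
      by (rule someI_ex)
    have "E (\<xi> x) = E (\<xi> (SOME x'. x' \<in> X \<and> q x' = q x))" using Q[OF x] s by simp
    then have "E (\<xi> x) = \<zeta> (q x)" unfolding \<zeta>_def .
    then show "Tmap X Z q (\<xi> x) = \<zeta> (q x)" unfolding E_def .
  qed
  have part1: "\<forall>i<k. \<forall>x\<in>A i. \<forall>y\<in>A i. beh_equiv TX Tmap X \<xi> x X \<xi> y"
  proof (intro allI impI ballI)
    fix i x y assume "i<k" "x \<in> A i" "y \<in> A i"
    then have "q x = q y" using F1[of i x] F1[of i y] by simp
    then show "beh_equiv TX Tmap X \<xi> x X \<xi> y" unfolding beh_equiv_def using coZ mor by (intro exI[of _ Z] exI[of _ \<zeta>] exI[of _ q]) simp
  qed
  show ?thesis using part1 part2 by blast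
qed

end
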